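(* Let $\epsilon>0$, $\delta\ge0$, $n\ge1$, let $\mathscr X$ be any set, and let $T:\mathscr X^n\to\mathbb{Z}$ satisfy $\sup|T(X)-T(X')|=1$, where the supremum is over all pairs $(X,X')\in\mathscr X^n\times\mathscr X^n$ with Hamming distance $\delta(X,X')=1$. Then the set of distributions $\big\{\mathrm{Tulap}\big(T(X),b=e^{-\epsilon},\tfrac{2\delta b}{1-b+2\delta b}\big)\ \big|\ X\in\mathscr X^n\big\}$ satisfies $(\epsilon,\delta)$-differential privacy.
   Context: The Hamming distance on $\mathscr X^n$ is $\delta(X,X')=\#\{i: X_i\ne X'_i\}$. A family $\{P_X: X\in\mathscr X^n\}$ of probability measures on a measurable space $(\mathscr Y,\mathscr F)$ satisfies $(\epsilon,\delta)$-differential privacy if for every $B\in\mathscr F$ and all $X,X'\in\mathscr X^n$ with $\delta(X,X')=1$, $P_X(B)\le e^\epsilon P_{X'}(B)+\delta$. Nearest integer function: $[t]$ is the integer nearest to $t$, with $[z+1/2]$ ($z\in\mathbb{Z}$) defined as the nearest even integer. Tulap distribution: for $m\in\mathbb{R}$, $b\in(0,1)$, $q\in[0,1)$, $N_0\sim\mathrm{Tulap}(m,b,0)$ has cdf $F_{N_0}(x)=\frac{b^{-[x-m]}}{1+b}\big(b+(x-m-[x-m]+\tfrac12)(1-b)\big)$ for $x\leq [m]$ and $F_{N_0}(x)=1-\frac{b^{[x-m]}}{1+b}\big(b+([x-m]-(x-m)+\tfrac12)(1-b)\big)$ for $x>[m]$; and $N\sim \mathrm{Tulap}(m,b,q)$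 has cdf $F_N(x)=\frac{F_{N_0}(x)-q/2}{1-q}\,I\{q/2\leq F_{N_0}(x)\leq 1-q/2\}+I\{F_{N_0}(x)>1-q/2\}$. *)

theory Defs
  imports "HOL-Analysis.Analysis"
begin

definition nearest_int :: "real \<Rightarrow> int" where
  "nearest_int t =
     (if t - of_int \<lfloor>t\<rfloor> = 1/2
      then (if even \<lfloor>t\<rfloor> then \<lfloor>t\<rfloor> else \<lfloor>t\<rfloor> + 1)
      else round t)"

definition tulap0_cdf :: "real \<Rightarrow> real \<Rightarrow> real \<Rightarrow> real" where
  "tulap0_cdf m b x =
     (if x \<le> of_int (nearest_int m)
      then b powi (- nearest_int (x - m)) / (1 + b)
             * (b + (x - m - of_int (nearest_int (x - m)) + 1/2) * (1 - b))
      else 1 - b powi (nearest_int (x - m)) / (1 + b)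
             * (b + (of_int (nearest_int (x - m)) - (x - m) + 1/2) * (1 - b)))"

definition tulap_cdf :: "real \<Rightarrow> real \<Rightarrow> real \<Rightarrow> real \<Rightarrow> real" where
  "tulap_cdf m b q x =
     (let F0 = tulap0_cdf m b x in
      (F0 - q/2) / (1 - q) * (if q/2 \<le> F0 \<and> F0 \<le> 1 - q/2 then 1 else 0)
      + (if F0 > 1 - q/2 then 1 else 0))"

definition Tulap :: "real \<Rightarrow> real \<Rightarrow> real \<Rightarrow> real measure" where
  "Tulap m b q = interval_measure (tulap_cdf m b q)"

definition hamming :: "'x list \<Rightarrow> 'x list \<Rightarrow> nat" where
  "hamming X X' = card {i. i < length X \<and> i < length X' \<and> X ! i \<noteq> X' ! i}"

definition differentially_private ::
  "nat \<Rightarrow> ('x list \<Rightarrow> 'y measure) \<Rightarrow> real \<Rightarrow> real \<Rightarrow> bool" where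
  "differentially_private n P \<epsilon> \<delta> \<longleftrightarrow>
     (\<forall>X X' B. length X = n \<and> length X' = n \<and> hamming X X' = 1 \<and> B \<in> sets (P X) \<longrightarrow>
        measure (P X) B \<le> exp \<epsilon> * measure (P X') B + \<delta>)"

end

theory Submission
  imports Defs "HOL-Probability.Distribution_Functions"
begin


definition phiL :: "real \<Rightarrow> real \<Rightarrow> real" where
  "phiL b y = b powi (- \<lfloor>y + 1/2\<rfloor>) / (1 + b) * (b + (y + 1/2 - of_int \<lfloor>y + 1/2\<rfloor>) * (1 - b))"

lemma pw: "(b::real) \<noteq> 0 \<Longrightarrow> b powi (- (k - 1)) = b * b powi (- k)"
proof -
  assume "b \<noteq> 0"
  have e: "- (k - 1) = 1 + (- k)" by simp
  show ?thesis unfolding e using \<open>b \<noteq> 0\<close> power_int_add[of b 1 "-k"] by simp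
qed

lemma phiL_shift:
  assumes "0 < b" shows "phiL b (y - 1) = b * phiL b y"
proof -
  have f: "\<lfloor>y - 1 + 1/2\<rfloor> = \<lfloor>y + 1/2\<rfloor> - 1"
    by (metis add.commute add_diff_eq floor_diff_one)
  have "b powi (- (\<lfloor>y + 1/2\<rfloor> - 1)) = b * b powi (- \<lfloor>y + 1/2\<rfloor>)"
    using assms by (intro pw) simp
  then show ?thesis unfolding phiL_def f by (simp add: field_simps)
qed

lemma phiL_nonneg: assumes "0 < b" "b < 1" shows "0 \<le> phiL b y"
proof -
  have "0 \<le> y + 1/2 - of_int \<lfloor>y + 1/2\<rfloor>" by linarith
  then show ?thesis unfolding phiL_def using assms
    by (intro mult_nonneg_nonneg divide_nonneg_pos add_nonneg_nonneg) auto
qed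

lemma phiL_mono:
  assumes "0 < b" "b < 1" "x \<le> y" shows "phiL b x \<le> phiL b y"
proof -
  define n where "n = \<lfloor>x + 1/2\<rfloor>"
  define k where "k = \<lfloor>y + 1/2\<rfloor>"
  have nk: "n \<le> k" unfolding n_def k_def using assms(3) by (intro floor_mono) simp
  have fx: "0 \<le> x + 1/2 - n" "x + 1/2 - n < 1" unfolding n_def by linarith+
  have fy: "0 \<le> y + 1/2 - k" "y + 1/2 - k < 1" unfolding k_def by linarith+
  show ?thesis
  proof (cases "n = k")
    case True
    have "x + 1/2 - n \<le> y + 1/2 - k" using True assms by simp
    then have "b + (x + 1/2 - n) * (1 - b) \<le> b + (y + 1/2 - k) * (1 - b)"
      using assms by (intro add_left_mono mult_right_mono) auto
    moreover have "0 \<le> b powi (- n) / (1 + b)" using assms by simp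
    ultimately have "b powi (- n) / (1 + b) * (b + (x + 1/2 - n) * (1 - b)) \<le> b powi (- n) / (1 + b) * (b + (y + 1/2 - k) * (1 - b))"
      by (intro mult_left_mono) auto
    then show ?thesis unfolding phiL_def n_def[symmetric] k_def[symmetric] using True by simp
  next
    case False
    then have nk': "n + 1 \<le> k" using nk by simp
    have p: "0 < b powi (- n)" using assms by simp
    have "phiL b x \<le> b powi (- n) / (1 + b)"
    proof -
      have "b + (x + 1/2 - n) * (1 - b) \<le> 1"
      proof -
        have "(x + 1/2 - n) * (1 - b) \<le> 1 * (1 - b)"
          using fx assms by (intro mult_right_mono) auto
        then show ?thesis by simp
      qed
      then show ?thesis unfolding phiL_def n_def[symmetric] using p assms
        by (metis divide_nonneg_pos less_eq_real_def mult.right_neutral mult_left_mono add_pos_pos zero_less_one)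
    qed
    also have "b powi (- n) \<le> b * b powi (- k)"
    proof -
      have "b * b powi (- k) = b powi (- (k - 1))" using assms by (intro pw[symmetric]) simp
      also have "b powi (- n) \<le> \<dots>"
        using assms nk' by (intro power_int_decreasing) auto
      finally show ?thesis .
    qed
    then have "b powi (- n) / (1 + b) \<le> b * b powi (- k) / (1 + b)" using assms by (simp add: divide_right_mono)
    also have "\<dots> \<le> phiL b y"
    proof -
      have "b \<le> b + (y + 1/2 - k) * (1 - b)" using fy assms by simp
      moreover have "0 \<le> b powi (- k) / (1 + b)" using assms by simp
      ultimately have "b powi (- k) / (1 + b) * b \<le> b powi (- k) / (1 + b) * (b + (y + 1/2 - k) * (1 - b))"
        by (intro mult_left_mono) auto
      then show ?thesis unfolding phiL_def k_def[symmetric] by (simp add: mult.commute)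
    qed
    finally show ?thesis .
  qed
qed



lemma floor_glue_isCont:
  fixes g :: "int \<Rightarrow> real \<Rightarrow> real"
  assumes c: "\<And>n. continuous_on UNIV (g n)" and m: "\<And>n. g n (of_int n) = g (n - 1) (of_int n)"
  shows "isCont (\<lambda>u. g \<lfloor>u\<rfloor> u) x"
proof -
  define n where "n = \<lfloor>x\<rfloor>"
  have ci: "isCont (g k) y" for k y using c by (simp add: continuous_on_eq_continuous_at)
  have R: "((\<lambda>u. g \<lfloor>u\<rfloor> u) \<longlongrightarrow> g n x) (at_right x)"
  proof -
    have ev: "eventually (\<lambda>u. g n u = g \<lfloor>u\<rfloor> u) (at_right x)"
      unfolding eventually_at_right_field
    proof (rule exI[of _ "of_int n + 1"], intro conjI allI impI)
      show "x < of_int n + 1" unfolding n_def by linarith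
      fix y assume "x < y" "y < of_int n + 1"
      then have "\<lfloor>y\<rfloor> = n" unfolding n_def by (simp add: floor_eq_iff) linarith
      then show "g n y = g \<lfloor>y\<rfloor> y" by simp
    qed
    have "(g n \<longlongrightarrow> g n x) (at_right x)"
      using ci[where k=n and y=x] unfolding isCont_def filterlim_at_split by (rule conjunct2)
    then show ?thesis using ev by (rule Lim_transform_eventually)
  qed
  have L: "((\<lambda>u. g \<lfloor>u\<rfloor> u) \<longlongrightarrow> g n x) (at_left x)"
  proof (cases "x = of_int n")
    case True
    have ev: "eventually (\<lambda>u. g (n - 1) u = g \<lfloor>u\<rfloor> u) (at_left x)"
      unfolding eventually_at_left_field using True
    proof (intro exI[of _ "of_int n - 1"] conjI allI impI)
      show "of_int n - 1 < x" using True by simp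
      fix y assume "of_int n - 1 < y" "y < x"
      then have "\<lfloor>y\<rfloor> = n - 1" using True by (simp add: floor_eq_iff)
      then show "g (n - 1) y = g \<lfloor>y\<rfloor> y" by simp
    qed
    have "(g (n - 1) \<longlongrightarrow> g (n - 1) x) (at_left x)"
      using ci[where k="n - 1" and y=x] unfolding isCont_def filterlim_at_split by (rule conjunct1)
    moreover have "g (n - 1) x = g n x" using m[of n] True by simp
    ultimately have "(g (n - 1) \<longlongrightarrow> g n x) (at_left x)" by simp
    then show ?thesis using ev by (rule Lim_transform_eventually)
  next
    case False
    then have "of_int n < x" using of_int_floor_le[of x] unfolding n_def by linarith
    have ev: "eventually (\<lambda>u. g n u = g \<lfloor>u\<rfloor> u) (at_left x)"
      unfolding eventually_at_left_field using \<open>of_int n < x\<close>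
    proof (intro exI[of _ "of_int n"] conjI allI impI)
      show "of_int n < x" by fact
      fix y assume "of_int n < y" "y < x"
      then have "\<lfloor>y\<rfloor> = n" unfolding n_def by (simp add: floor_eq_iff) linarith
      then show "g n y = g \<lfloor>y\<rfloor> y" by simp
    qed
    have "(g n \<longlongrightarrow> g n x) (at_left x)"
      using ci[where k=n and y=x] unfolding isCont_def filterlim_at_split by (rule conjunct1)
    then show ?thesis using ev by (rule Lim_transform_eventually)
  qed
  show ?thesis using L R unfolding isCont_def filterlim_at_split n_def by (rule conjI)
qed



lemma phiL_cont:
  assumes "0 < b" shows "isCont (phiL b) x"
proof -
  define g where "g = (\<lambda>(n::int) (u::real). b powi (- n) / (1 + b) * (b + (u - of_int n) * (1 - b)))"
  have e: "phiL b = (\<lambda>y. (\<lambda>u. g \<lfloor>u\<rfloor> u) (y + 1/2))"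
    unfolding phiL_def g_def by (auto simp: fun_eq_iff)
  have "isCont (\<lambda>u. g \<lfloor>u\<rfloor> u) (x + 1/2)"
  proof (rule floor_glue_isCont)
    show "continuous_on UNIV (g n)" for n unfolding g_def by (intro continuous_intros)
    show "g n (of_int n) = g (n - 1) (of_int n)" for n
    proof -
      have "b powi (1 - n) = b * b powi (-n)" using assms pw[of b n] by simp
      then show ?thesis unfolding g_def using assms by (simp add: field_simps)
    qed
  qed
  note hc = this
  show ?thesis unfolding e
    by (rule isCont_o2[where f="\<lambda>y. y + 1/2", OF _ hc]) (intro continuous_intros)
qed

lemma phiL_0: "phiL b 0 = 1/2" if "0 < b" using that unfolding phiL_def by (simp add: field_simps)
lemma phiL_mhalf: "phiL b (-1/2) = b/(1+b)" unfolding phiL_def by simp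
lemma phiL_half: "0 < b \<Longrightarrow> phiL b (1/2) = 1/(1+b)" unfolding phiL_def by simp

lemma phiL_sym:
  assumes "0 < b" "-1/2 \<le> y" "y \<le> 1/2" shows "phiL b y + phiL b (-y) = 1"
proof -
  consider "y = 1/2" | "y = -1/2" | "-1/2 < y \<and> y < 1/2" using assms by linarith
  then show ?thesis
  proof cases
    case 1
    have "1 + b > 0" using assms by simp
    have "phiL b (1/2) + phiL b (-(1/2)) = 1/(1+b) + b/(1+b)" using phiL_half[of b] phiL_mhalf[of b] assms by simp
    also have "\<dots> = 1" using \<open>1 + b > 0\<close> by (simp add: add_divide_distrib[symmetric])
    finally show ?thesis unfolding 1 by simp
  next
    case 2
    have "1 + b > 0" using assms by simp
    have "phiL b (1/2) + phiL b (-(1/2)) = 1/(1+b) + b/(1+b)" using phiL_half[of b] phiL_mhalf[of b] assms by simp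
    also have "\<dots> = 1" using \<open>1 + b > 0\<close> by (simp add: add_divide_distrib[symmetric])
    finally show ?thesis unfolding 2 by simp
  next
    case 3
    then have "\<lfloor>y + 1/2\<rfloor> = 0" "\<lfloor>-y + 1/2\<rfloor> = 0" by (simp_all add: floor_eq_iff)
    then have "phiL b y + phiL b (-y) = (b + (y + 1/2) * (1 - b)) / (1 + b) + (b + (-y + 1/2) * (1 - b)) / (1 + b)"
      unfolding phiL_def by (simp only:) simp
    also have "\<dots> = ((b + (y + 1/2) * (1 - b)) + (b + (-y + 1/2) * (1 - b))) / (1 + b)" by (simp add: add_divide_distrib)
    also have "(b + (y + 1/2) * (1 - b)) + (b + (-y + 1/2) * (1 - b)) = 1 + b" by (simp add: algebra_simps)
    also have "(1 + b) / (1 + b) = 1" using assms by simp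
    finally show ?thesis .
  qed
qed



definition Af :: "real \<Rightarrow> real \<Rightarrow> real" where
  "Af b y = (if y \<le> 0 then phiL b y else 1 - phiL b (- y))"

lemma Af_alt: assumes "0 < b" shows "Af b y = phiL b (min y 0) + 1/2 - phiL b (min (- y) 0)"
  using phiL_0[OF assms] unfolding Af_def by (auto simp: min_def)

lemma Af_cont: assumes "0 < b" shows "isCont (Af b) x"
proof -
  have e: "Af b = (\<lambda>y. phiL b (min y 0) + 1/2 - phiL b (min (- y) 0))"
    using Af_alt[OF assms] by auto
  have c1: "isCont (\<lambda>y. phiL b (min y 0)) x"
    by (rule isCont_o2[where f="\<lambda>y. min y 0", OF _ phiL_cont[OF assms]]) (intro continuous_intros)
  have c2: "isCont (\<lambda>y. phiL b (min (- y) 0)) x"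
    by (rule isCont_o2[where f="\<lambda>y. min (- y) 0", OF _ phiL_cont[OF assms]]) (intro continuous_intros)
  show ?thesis unfolding e using c1 c2 by (intro continuous_intros)
qed

lemma Af_cont_on: "0 < b \<Longrightarrow> continuous_on S (Af b)"
  by (simp add: Af_cont continuous_at_imp_continuous_on)

lemma Af_mono: assumes "0 < b" "b < 1" "x \<le> y" shows "Af b x \<le> Af b y"
proof -
  have h: "phiL b z \<le> 1/2" if "z \<le> 0" for z
    using phiL_mono[OF assms(1,2) that] phiL_0[OF assms(1)] by simp
  show ?thesis unfolding Af_def
    using phiL_mono[OF assms(1,2) assms(3)] phiL_mono[OF assms(1,2), of "-y" "-x"] assms(3) h[of x] h[of "-y"]
    by auto
qed

lemma Af_sym: assumes "0 < b" shows "Af b (- y) = 1 - Af b y"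
  using phiL_0[OF assms] unfolding Af_def by auto

lemma Af_0: "0 < b \<Longrightarrow> Af b 0 = 1/2" unfolding Af_def by (simp add: phiL_0)
lemma Af_mhalf: "Af b (-1/2) = b/(1+b)" unfolding Af_def using phiL_mhalf by simp
lemma Af_half: assumes "0 < b" shows "Af b (1/2) = 1/(1+b)"
proof -
  have "Af b (1/2) = 1 - b/(1+b)" unfolding Af_def using phiL_mhalf[of b] by simp
  also have "\<dots> = 1/(1+b)" using assms by (simp add: field_simps)
  finally show ?thesis .
qed

lemma Af_shift_low: assumes "0 < b" "y \<le> 1/2" shows "Af b (y - 1) = b * Af b y"
proof (cases "y \<le> 0")
  case True then show ?thesis unfolding Af_def using phiL_shift[OF assms(1)] by simp
next
  case False
  then have "Af b y = phiL b y" unfolding Af_def using phiL_sym[OF assms(1), of y] assms by auto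
  then show ?thesis unfolding Af_def using phiL_shift[OF assms(1), of y] assms by simp
qed

lemma Af_shift_high: assumes "0 < b" "-1/2 \<le> y" shows "Af b (y + 1) = 1 - b * (1 - Af b y)"
proof -
  have "Af b (y + 1) = 1 - Af b (- y - 1)" using Af_sym[OF assms(1), of "y + 1"] by simp
  also have "Af b (- y - 1) = b * Af b (- y)" using Af_shift_low[OF assms(1), of "-y"] assms by simp
  also have "Af b (- y) = 1 - Af b y" by (rule Af_sym[OF assms(1)])
  finally show ?thesis .
qed

lemma Af_nonneg: "0 < b \<Longrightarrow> b < 1 \<Longrightarrow> 0 \<le> Af b y"
  unfolding Af_def using phiL_nonneg[of b] phiL_mono[of b "-y" 0] phiL_0[of b] by auto

lemma Af_le1: assumes "0 < b" "b < 1" shows "Af b y \<le> 1"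
  using Af_nonneg[OF assms, of "-y"] Af_sym[OF assms(1), of y] by simp

lemma Af_neg_nat: assumes "0 < b" shows "Af b (- real n) = b ^ n / 2"
proof (induction n)
  case 0 then show ?case using Af_0[OF assms] by simp
next
  case (Suc n)
  have "- real (Suc n) = - real n - 1" by simp
  then have "Af b (- real (Suc n)) = Af b (- real n - 1)" by (simp only:)
  also have "\<dots> = b * Af b (- real n)" by (rule Af_shift_low[OF assms]) simp
  finally show ?case using Suc by simp
qed

lemma Af_lim_bot: assumes "0 < b" "b < 1" shows "(Af b \<longlongrightarrow> 0) at_bot"
proof -
  have m: "mono (\<lambda>x. - Af b (- x))" using Af_mono[OF assms] by (auto simp: mono_def)
  have "(\<lambda>n. - Af b (- real n)) \<longlonglongrightarrow> - 0"
    unfolding Af_neg_nat[OF assms(1)] using assms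
    by (intro tendsto_minus tendsto_divide_zero LIMSEQ_power_zero) auto
  then have *: "((\<lambda>x. - Af b (- x)) \<longlongrightarrow> - 0) at_top"
    by (intro tendsto_at_topI_sequentially_real m) simp
  have "((\<lambda>x. - Af b (- (- x))) \<longlongrightarrow> - 0) at_bot"
    by (rule filterlim_compose[OF * filterlim_uminus_at_top_at_bot])
  then have "((\<lambda>x. - Af b x) \<longlongrightarrow> - 0) at_bot" by simp
  then show ?thesis by (simp add: tendsto_minus_cancel_left[symmetric])
qed

lemma Af_lim_top: assumes "0 < b" "b < 1" shows "(Af b \<longlongrightarrow> 1) at_top"
proof -
  have "((\<lambda>x. Af b (- x)) \<longlongrightarrow> 0) at_top"
    by (rule filterlim_compose[OF Af_lim_bot[OF assms] filterlim_uminus_at_bot_at_top])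
  then have "((\<lambda>x. 1 - Af b (- x)) \<longlongrightarrow> 1 - 0) at_top" by (intro tendsto_diff) auto
  then show ?thesis using Af_sym[OF assms(1)] by simp
qed

lemma Af_j: assumes "0 < b" "b < 1"
  shows "Af b (t - 1) - b * Af b t = (1/b - b) * max (Af b t) (1/(1+b)) - (1-b)/b"
proof (cases "t \<le> 1/2")
  case True
  have "Af b t \<le> 1/(1+b)" using Af_mono[OF assms True] Af_half[OF assms(1)] by simp
  then have "max (Af b t) (1/(1+b)) = 1/(1+b)" by simp
  moreover have "(1/b - b) * (1/(1+b)) - (1-b)/b = 0"
  proof -
    have "1/b - b = (1-b)*(1+b)/b" using assms by (simp add: field_simps)
    then show ?thesis using assms by simp
  qed
  ultimately show ?thesis using Af_shift_low[OF assms(1) True] by simp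
next
  case False
  have "Af b (1/2) \<le> Af b t" using Af_mono[OF assms] False by simp
  then have mx: "max (Af b t) (1/(1+b)) = Af b t" using Af_half[OF assms(1)] by simp
  have "Af b t = 1 - b * (1 - Af b (t - 1))" using Af_shift_high[OF assms(1), of "t - 1"] False by simp
  then have h: "b * Af b (t - 1) = Af b t - 1 + b" by (simp add: algebra_simps)
  have "(Af b t - 1 + b) / b = b * Af b (t - 1) / b" by (simp add: h)
  then have e2: "Af b (t - 1) = (Af b t - 1 + b) / b" using assms by simp
  have "(Af b t - 1 + b) / b = Af b t / b - (1 - b) / b" by (simp add: diff_divide_distrib add_divide_distrib)
  then show ?thesis unfolding mx e2 by (simp add: left_diff_distrib)
qed

lemma Af_k: assumes "0 < b" "b < 1"
  shows "Af b (t + 1) - b * Af b t = (1/b - b) * min (Af b t) (b/(1+b))"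
proof (cases "-1/2 \<le> t")
  case True
  have "b/(1+b) \<le> Af b t" using Af_mono[OF assms True] Af_mhalf[of b] by simp
  then have "min (Af b t) (b/(1+b)) = b/(1+b)" by simp
  moreover have "(1/b - b) * (b/(1+b)) = 1 - b"
  proof -
    have "1/b - b = (1-b)*(1+b)/b" using assms by (simp add: field_simps)
    then show ?thesis using assms by simp
  qed
  ultimately show ?thesis using Af_shift_high[OF assms(1) True] by (simp add: algebra_simps)
next
  case False
  have "Af b t \<le> Af b (-1/2)" using Af_mono[OF assms] False by simp
  then have mn: "min (Af b t) (b/(1+b)) = Af b t" using Af_mhalf[of b] by simp
  have "Af b t = b * Af b (t + 1)" using Af_shift_low[OF assms(1), of "t + 1"] False by simp
  then have "Af b t / b = b * Af b (t + 1) / b" by simp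
  then have "Af b (t + 1) = Af b t / b" using assms by simp
  then show ?thesis unfolding mn using assms by (simp add: field_simps)
qed

lemma Af_j_mono: assumes "0 < b" "b < 1" "x \<le> y"
  shows "Af b (x - 1) - b * Af b x \<le> Af b (y - 1) - b * Af b y"
proof -
  have "0 \<le> 1/b - b" using assms by (simp add: field_simps) (metis less_eq_real_def mult_le_one)
  then show ?thesis unfolding Af_j[OF assms(1,2)]
    using Af_mono[OF assms] by (auto intro!: mult_left_mono)
qed

lemma Af_k_mono: assumes "0 < b" "b < 1" "x \<le> y"
  shows "Af b (x + 1) - b * Af b x \<le> Af b (y + 1) - b * Af b y"
proof -
  have "0 \<le> 1/b - b" using assms by (simp add: field_simps) (metis less_eq_real_def mult_le_one)
  then show ?thesis unfolding Af_k[OF assms(1,2)]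
    using Af_mono[OF assms] by (auto intro!: mult_left_mono)
qed



lemma nearest_int_of_int [simp]: "nearest_int (of_int k) = k"
  unfolding nearest_int_def by simp

lemma ni_cases:
  fixes y :: real
  obtains (notie) "y - of_int \<lfloor>y\<rfloor> \<noteq> 1/2" "nearest_int y = \<lfloor>y + 1/2\<rfloor>"
    | (tie) z where "y = of_int z + 1/2" "nearest_int y = z \<or> nearest_int y = z + 1"
proof (cases "y - of_int \<lfloor>y\<rfloor> = 1/2")
  case True
  then show ?thesis using tie[of "\<lfloor>y\<rfloor>"] unfolding nearest_int_def by auto
next
  case False
  then show ?thesis using notie unfolding nearest_int_def round_def by auto
qed

lemma NI_low:
  fixes b y :: real assumes "b \<noteq> 0"
  shows "b powi (- nearest_int y) * (b + (y - of_int (nearest_int y) + 1/2) * (1 - b))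
       = b powi (- \<lfloor>y + 1/2\<rfloor>) * (b + (y + 1/2 - of_int \<lfloor>y + 1/2\<rfloor>) * (1 - b))"
proof (cases y rule: ni_cases)
  case notie
  then show ?thesis by (simp add: algebra_simps)
next
  case (tie z)
  have f: "\<lfloor>y + 1/2\<rfloor> = z + 1" using tie(1) by (simp add: floor_eq_iff)
  have p: "b powi (- (z + 1)) * b = b powi (- z)"
    using pw[OF assms, of "z + 1"] by (simp add: mult.commute)
  from tie(2) show ?thesis
  proof
    assume r: "nearest_int y = z"
    show ?thesis unfolding r f using tie(1) p by (simp add: algebra_simps)
  next
    assume r: "nearest_int y = z + 1"
    show ?thesis unfolding r f using tie(1) by (simp add: algebra_simps)
  qed
qed

lemma NI_up:
  fixes b y :: real assumes "b \<noteq> 0"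
  shows "b powi (nearest_int y) * (b + (of_int (nearest_int y) - y + 1/2) * (1 - b))
       = b powi (- \<lfloor>- y + 1/2\<rfloor>) * (b + (- y + 1/2 - of_int \<lfloor>- y + 1/2\<rfloor>) * (1 - b))"
proof (cases y rule: ni_cases)
  case notie
  define n where "n = \<lfloor>y + 1/2\<rfloor>"
  have "of_int n \<le> y + 1/2" "y + 1/2 < of_int n + 1" unfolding n_def by linarith+
  moreover have "y + 1/2 \<noteq> of_int n"
  proof
    assume "y + 1/2 = of_int n"
    then have "y = of_int (n - 1) + 1/2" by simp
    then have "\<lfloor>y\<rfloor> = n - 1" by (simp add: floor_eq_iff)
    then show False using notie(1) \<open>y + 1/2 = of_int n\<close> by simp
  qed
  ultimately have "\<lfloor>- y + 1/2\<rfloor> = - n" by (simp add: floor_eq_iff)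
  then show ?thesis using notie(2) unfolding n_def[symmetric] by (simp add: algebra_simps)
next
  case (tie z)
  have f: "\<lfloor>- y + 1/2\<rfloor> = - z" using tie(1) by (simp add: floor_eq_iff)
  have p: "b powi (z + 1) = b powi z * b"
    using assms by (simp add: power_int_add_1)
  from tie(2) show ?thesis
  proof
    assume r: "nearest_int y = z"
    show ?thesis unfolding r f using tie(1) by (simp add: algebra_simps)
  next
    assume r: "nearest_int y = z + 1"
    show ?thesis unfolding r f using tie(1) p by (simp add: algebra_simps)
  qed
qed

lemma tulap0_cdf_Af:
  assumes "0 < b" shows "tulap0_cdf (of_int k) b x = Af b (x - of_int k)"
proof (cases "x \<le> of_int k")
  case True
  have "tulap0_cdf (of_int k) b x = b powi (- nearest_int (x - k)) / (1 + b)
             * (b + (x - k - of_int (nearest_int (x - k)) + 1/2) * (1 - b))"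
    unfolding tulap0_cdf_def using True by simp
  also have "\<dots> = (b powi (- nearest_int (x - k)) * (b + ((x - k) - of_int (nearest_int (x - k)) + 1/2) * (1 - b))) / (1 + b)"
    by simp
  also have "\<dots> = phiL b (x - k)" using NI_low[of b "x - k"] assms unfolding phiL_def by simp
  finally show ?thesis unfolding Af_def using True by simp
next
  case False
  have "tulap0_cdf (of_int k) b x = 1 - b powi (nearest_int (x - k)) / (1 + b)
             * (b + (of_int (nearest_int (x - k)) - (x - k) + 1/2) * (1 - b))"
    unfolding tulap0_cdf_def using False by simp
  also have "\<dots> = 1 - (b powi (nearest_int (x - k)) * (b + (of_int (nearest_int (x - k)) - (x - k) + 1/2) * (1 - b))) / (1 + b)"
    by simp
  also have "\<dots> = 1 - phiL b (- (x - k))" using NI_up[of b "x - k"] assms unfolding phiL_def by simp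
  finally show ?thesis unfolding Af_def using False by simp
qed

definition clamp01 :: "real \<Rightarrow> real" where "clamp01 t = max 0 (min 1 t)"

lemma tulap_cdf_clamp:
  assumes "0 \<le> q" "q < 1"
  shows "tulap_cdf m b q x = clamp01 ((tulap0_cdf m b x - q/2) / (1 - q))"
proof -
  define F where "F = tulap0_cdf m b x"
  have "tulap_cdf m b q x = (F - q/2) / (1 - q) * (if q/2 \<le> F \<and> F \<le> 1 - q/2 then 1 else 0)
      + (if F > 1 - q/2 then 1 else 0)" unfolding tulap_cdf_def F_def Let_def by simp
  also have "\<dots> = clamp01 ((F - q/2) / (1 - q))"
  proof -
    have pos: "0 < 1 - q" using assms by simp
    consider "F < q/2" | "q/2 \<le> F \<and> F \<le> 1 - q/2" | "F > 1 - q/2" by linarith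
    then show ?thesis
    proof cases
      case 1
      then have "(F - q/2) / (1 - q) \<le> 0" using pos by (simp add: divide_nonpos_pos)
      then show ?thesis using 1 assms unfolding clamp01_def by auto
    next
      case 2
      then have "0 \<le> (F - q/2) / (1 - q)" "(F - q/2) / (1 - q) \<le> 1" using pos
        by (simp_all add: divide_le_eq)
      then show ?thesis using 2 unfolding clamp01_def by auto
    next
      case 3
      then have "1 \<le> (F - q/2) / (1 - q)" using pos by (simp add: le_divide_eq)
      then show ?thesis using 3 assms unfolding clamp01_def by auto
    qed
  qed
  finally show ?thesis unfolding F_def .
qed



definition nice :: "(real \<Rightarrow> real) \<Rightarrow> real \<Rightarrow> bool" where
  "nice F m \<longleftrightarrow> (\<forall>x y. x \<le> y \<longrightarrow> F x \<le> F y) \<and> (\<forall>a. continuous (at_right a) F)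
     \<and> (F \<longlongrightarrow> 0) at_bot \<and> (F \<longlongrightarrow> m) at_top"

lemma nice_nonneg: assumes "nice F m" shows "0 \<le> F x"
proof -
  have "(F \<longlongrightarrow> 0) at_bot" "\<forall>x y. x \<le> y \<longrightarrow> F x \<le> F y" using assms unfolding nice_def by auto
  then show ?thesis
    by (intro tendsto_upperbound[of F 0 at_bot "F x"]) (auto simp: eventually_at_bot_linorder intro!: exI[of _ x])
qed

lemma nice_m_nonneg: assumes "nice F m" shows "0 \<le> m"
proof -
  have "(F \<longlongrightarrow> m) at_top" using assms unfolding nice_def by auto
  then show ?thesis
    by (rule tendsto_lowerbound) (auto simp: nice_nonneg[OF assms])
qed

lemma nice_fbm: "nice F m \<Longrightarrow> finite_borel_measure (interval_measure F)"
  unfolding nice_def using nice_m_nonneg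
  by (intro finite_borel_measure_interval_measure[where m=m]) (auto simp: nice_def)

lemma nice_fm: "nice F m \<Longrightarrow> finite_measure (interval_measure F)"
  using nice_fbm finite_borel_measure.axioms(1) by blast

lemma nice_UNIV: assumes "nice F m" shows "measure (interval_measure F) UNIV = m"
proof -
  have "emeasure (interval_measure F) UNIV = m"
    using assms nice_m_nonneg[OF assms] unfolding nice_def
    by (intro interval_measure_UNIV) auto
  then show ?thesis using nice_m_nonneg[OF assms] by (simp add: measure_def)
qed

lemma nice_Ioc: assumes "nice F m" "u \<le> v" shows "measure (interval_measure F) {u<..v} = F v - F u"
  using assms unfolding nice_def by (intro measure_interval_measure_Ioc) auto

lemma nice_lin: assumes "nice P mp" "nice Q mq" "0 \<le> a"
  shows "nice (\<lambda>x. a * P x + Q x) (a * mp + mq)"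
  using assms unfolding nice_def
  by (auto intro!: add_mono mult_left_mono tendsto_eq_intros continuous_add continuous_mult)

lemma nice_zero: "nice (\<lambda>x. 0) 0" unfolding nice_def by auto

lemma im_add:
  assumes P: "nice P mp" and Q: "nice Q mq" and a: "0 \<le> a" and B: "B \<in> sets borel"
  shows "measure (interval_measure (\<lambda>x. a * P x + Q x)) B
       = a * measure (interval_measure P) B + measure (interval_measure Q) B"
proof -
  define R where "R = (\<lambda>x. a * P x + Q x)"
  have R: "nice R (a * mp + mq)" unfolding R_def by (rule nice_lin[OF P Q a])
  define Gs where "Gs = range (\<lambda>(u, v). {u<..v::real})"
  have sb: "sets borel = sigma_sets UNIV Gs"
    unfolding Gs_def borel_sigma_sets_Ioc by (rule sets_measure_of) auto
  have ist: "Int_stable Gs" unfolding Gs_def Int_stable_def by auto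
  interpret MR: finite_measure "interval_measure R" by (rule nice_fm[OF R])
  interpret MP: finite_measure "interval_measure P" by (rule nice_fm[OF P])
  interpret MQ: finite_measure "interval_measure Q" by (rule nice_fm[OF Q])
  have Bs: "B \<in> sigma_sets UNIV Gs" using B sb by simp
  have cl: "Gs \<subseteq> Pow UNIV" by simp
  from ist cl Bs have "measure (interval_measure R) B
       = a * measure (interval_measure P) B + measure (interval_measure Q) B"
  proof (induction rule: sigma_sets_induct_disjoint)
    case (basic A)
    then obtain u v where A: "A = {u<..v}" unfolding Gs_def by auto
    show ?case
    proof (cases "u \<le> v")
      case True
      show ?thesis unfolding A nice_Ioc[OF R True] nice_Ioc[OF P True] nice_Ioc[OF Q True]
        unfolding R_def by (simp add: algebra_simps)
    next
      case False
      then show ?thesis unfolding A by simp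
    qed
  next
    case empty show ?case by simp
  next
    case (compl A)
    then have As: "A \<in> sets borel" using sb by simp
    have h1: "measure (interval_measure R) (UNIV - A) = (a * mp + mq) - measure (interval_measure R) A"
      using MR.finite_measure_compl[of A] As nice_UNIV[OF R] by simp
    have h2: "measure (interval_measure P) (UNIV - A) = mp - measure (interval_measure P) A"
      using MP.finite_measure_compl[of A] As nice_UNIV[OF P] by simp
    have h3: "measure (interval_measure Q) (UNIV - A) = mq - measure (interval_measure Q) A"
      using MQ.finite_measure_compl[of A] As nice_UNIV[OF Q] by simp
    show ?case unfolding h1 h2 h3 compl.IH by (simp add: algebra_simps)
  next
    case (union A)
    then have As: "range A \<subseteq> sets borel" using sb by auto
    have "(\<lambda>i. measure (interval_measure R) (A i)) sums measure (interval_measure R) (\<Union>i. A i)"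
      using MR.finite_measure_UNION[of A] As union.hyps(1) by simp
    moreover have "(\<lambda>i. measure (interval_measure P) (A i)) sums measure (interval_measure P) (\<Union>i. A i)"
      using MP.finite_measure_UNION[of A] As union.hyps(1) by simp
    moreover have "(\<lambda>i. measure (interval_measure Q) (A i)) sums measure (interval_measure Q) (\<Union>i. A i)"
      using MQ.finite_measure_UNION[of A] As union.hyps(1) by simp
    ultimately have s1: "(\<lambda>i. measure (interval_measure R) (A i)) sums measure (interval_measure R) (\<Union>i. A i)"
      and s2: "(\<lambda>i. measure (interval_measure R) (A i)) sums (a * measure (interval_measure P) (\<Union>i. A i) + measure (interval_measure Q) (\<Union>i. A i))"
      using union.IH by (auto intro!: sums_add sums_mult)
    show ?case using sums_unique2[OF s1 s2] .
  qed
  then show ?thesis unfolding R_def .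
qed

lemma dp_generic:
  assumes F: "nice F mF" and G: "nice G mG" and F1: "nice F1 m1" and F2: "nice F2 m2"
    and split: "\<And>x. F x = F1 x + F2 x"
    and Hmono: "\<And>x y. x \<le> y \<Longrightarrow> c * G x - F1 x \<le> c * G y - F1 y"
    and c: "0 \<le> c" and d: "m2 \<le> d" and B: "B \<in> sets borel"
  shows "measure (interval_measure F) B \<le> c * measure (interval_measure G) B + d"
proof -
  define H where "H = (\<lambda>x. c * G x - F1 x)"
  have Hn: "nice H (c * mG - m1)"
    using G F1 Hmono unfolding nice_def H_def
    by (auto intro!: tendsto_eq_intros continuous_diff continuous_mult)
  have e1: "F = (\<lambda>x. 1 * F1 x + F2 x)" using split by auto
  have m1: "measure (interval_measure F) B = measure (interval_measure F1) B + measure (interval_measure F2) B"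
    unfolding e1 using im_add[OF F1 F2 _ B, of 1] by simp
  have e2: "(\<lambda>x. 1 * F1 x + H x) = (\<lambda>x. c * G x + 0)" unfolding H_def by auto
  have "measure (interval_measure F1) B + measure (interval_measure H) B
      = c * measure (interval_measure G) B + measure (interval_measure (\<lambda>x. 0)) B"
    using im_add[OF F1 Hn _ B, of 1] im_add[OF G nice_zero c B] unfolding e2 by simp
  moreover have "measure (interval_measure (\<lambda>x. 0)) B \<le> 0"
  proof -
    interpret M0: finite_measure "interval_measure (\<lambda>x. 0)" by (rule nice_fm[OF nice_zero])
    show ?thesis using M0.bounded_measure[of B] nice_UNIV[OF nice_zero] by simp
  qed
  moreover have "measure (interval_measure F2) B \<le> m2"
  proof -
    interpret M2: finite_measure "interval_measure F2" by (rule nice_fm[OF F2])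
    show ?thesis using M2.bounded_measure[of B] nice_UNIV[OF F2] by simp
  qed
  moreover have "0 \<le> measure (interval_measure H) B" by simp
  ultimately show ?thesis using m1 d by linarith
qed



lemma shift_bot: "filterlim (\<lambda>x::real. x - c) at_bot at_bot"
proof -
  have "LIM x at_bot. (\<lambda>_. - c) x + x :> at_bot"
    by (subst filterlim_tendsto_add_at_bot_iff[of "\<lambda>_. - c" "- c"]) (auto simp: filterlim_ident)
  then show ?thesis by simp
qed

lemma shift_top: "filterlim (\<lambda>x::real. x - c) at_top at_top"
proof -
  have "LIM x at_top. (\<lambda>_. - c) x + x :> at_top"
    by (rule filterlim_tendsto_add_at_top[of "\<lambda>_. - c" "- c"]) (auto simp: filterlim_ident)
  then show ?thesis by simp
qed

lemma clamp01_mono: "s \<le> t \<Longrightarrow> clamp01 s \<le> clamp01 t" unfolding clamp01_def by auto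
lemma clamp01_id: "0 \<le> t \<Longrightarrow> t \<le> 1 \<Longrightarrow> clamp01 t = t" unfolding clamp01_def by auto
lemma clamp01_0: "t \<le> 0 \<Longrightarrow> clamp01 t = 0" unfolding clamp01_def by auto
lemma clamp01_1: "1 \<le> t \<Longrightarrow> clamp01 t = 1" unfolding clamp01_def by auto
lemma clamp01_ge0: "0 \<le> clamp01 t" unfolding clamp01_def by auto
lemma clamp01_le1: "clamp01 t \<le> 1" unfolding clamp01_def by auto

definition Psi :: "real \<Rightarrow> real \<Rightarrow> real \<Rightarrow> real" where
  "Psi b q y = clamp01 ((Af b y - q/2) / (1 - q))"

lemma Psi_mono: assumes "0 < b" "b < 1" "q < 1" "x \<le> y" shows "Psi b q x \<le> Psi b q y"
  unfolding Psi_def using Af_mono[OF assms(1,2,4)] assms(3)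
  by (intro clamp01_mono divide_right_mono) auto

lemma Psi_cont: assumes "0 < b" "q < 1" shows "isCont (Psi b q) x"
proof -
  have c: "isCont (Af b) x" by (rule Af_cont[OF assms(1)])
  show ?thesis unfolding Psi_def[abs_def] clamp01_def using assms
    by (intro continuous_intros c) auto
qed

lemma nice_Psi: assumes "0 < b" "b < 1" "0 \<le> q" "q < 1"
  shows "nice (\<lambda>x. Psi b q (x - c)) 1"
  unfolding nice_def
proof (intro conjI allI impI)
  show "Psi b q (x - c) \<le> Psi b q (y - c)" if "x \<le> y" for x y
    using Psi_mono[OF assms(1,2,4)] that by simp
  show "continuous (at_right a) (\<lambda>x. Psi b q (x - c))" for a
  proof -
    have "isCont (\<lambda>x. Psi b q (x - c)) a"
      by (rule isCont_o2[where f="\<lambda>x. x - c", OF _ Psi_cont[OF assms(1,4)]]) (intro continuous_intros)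
    then show ?thesis by (rule continuous_at_imp_continuous_at_within)
  qed
  have lb: "(Psi b q \<longlongrightarrow> clamp01 ((0 - q/2) / (1 - q))) at_bot"
    unfolding Psi_def[abs_def] clamp01_def using assms
    by (intro tendsto_intros Af_lim_bot) auto
  have "clamp01 ((0 - q/2) / (1 - q)) = 0" using assms by (intro clamp01_0) (simp add: divide_nonpos_pos)
  with lb have "(Psi b q \<longlongrightarrow> 0) at_bot" by simp
  then show "((\<lambda>x. Psi b q (x - c)) \<longlongrightarrow> 0) at_bot"
    by (rule filterlim_compose[OF _ shift_bot])
  have lt: "(Psi b q \<longlongrightarrow> clamp01 ((1 - q/2) / (1 - q))) at_top"
    unfolding Psi_def[abs_def] clamp01_def using assms
    by (intro tendsto_intros Af_lim_top) auto
  have "clamp01 ((1 - q/2) / (1 - q)) = 1" using assms by (intro clamp01_1) (simp add: le_divide_eq)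
  with lt have "(Psi b q \<longlongrightarrow> 1) at_top" by simp
  then show "((\<lambda>x. Psi b q (x - c)) \<longlongrightarrow> 1) at_top"
    by (rule filterlim_compose[OF _ shift_top])
qed

lemma Tulap_Psi:
  assumes "0 < b" "0 \<le> q" "q < 1"
  shows "Tulap (of_int k) b q = interval_measure (\<lambda>x. Psi b q (x - of_int k))"
proof -
  have "tulap_cdf (of_int k) b q = (\<lambda>x. Psi b q (x - of_int k))"
    using assms by (auto simp: fun_eq_iff tulap_cdf_clamp tulap0_cdf_Af Psi_def)
  then show ?thesis unfolding Tulap_def by simp
qed

lemma mono3:
  fixes h :: "real \<Rightarrow> real"
  assumes pr: "p \<le> r"
    and h1: "\<And>x y. x \<le> y \<Longrightarrow> y \<le> p \<Longrightarrow> h x \<le> h y"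
    and h2: "\<And>x y. p \<le> x \<Longrightarrow> x \<le> y \<Longrightarrow> y \<le> r \<Longrightarrow> h x \<le> h y"
    and h3: "\<And>x y. r \<le> x \<Longrightarrow> x \<le> y \<Longrightarrow> h x \<le> h y"
    and xy: "x \<le> y"
  shows "h x \<le> h y"
proof -
  have A: "h u \<le> h v" if "u \<le> v" "v \<le> r" for u v
  proof (cases "v \<le> p")
    case True then show ?thesis using h1 that by auto
  next
    case False
    show ?thesis
    proof (cases "p \<le> u")
      case True then show ?thesis using h2 that by auto
    next
      case False
      then have "h u \<le> h p" using h1 by auto
      also have "h p \<le> h v" using h2 \<open>\<not> v \<le> p\<close> that by auto
      finally show ?thesis .
    qed
  qed
  show ?thesis
  proof (cases "y \<le> r")
    case True then show ?thesis using A xy by auto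
  next
    case False
    show ?thesis
    proof (cases "r \<le> x")
      case True then show ?thesis using h3 xy by auto
    next
      case False
      then have "h x \<le> h r" using A by auto
      also have "h r \<le> h y" using h3 \<open>\<not> y \<le> r\<close> by auto
      finally show ?thesis .
    qed
  qed
qed

lemma alg1:
  fixes b s a u1 v1 u2 v2 :: real
  assumes "0 < b" "0 < s" "u1 - b * v1 \<le> u2 - b * v2"
  shows "(1/b) * ((u1 - a) / s) - (v1 - a) / s \<le> (1/b) * ((u2 - a) / s) - (v2 - a) / s"
proof -
  have e: "(1/b) * ((u - a) / s) - (v - a) / s = (u - b * v) / (b * s) + (a - a / b) / s" for u v
    using assms by (simp add: field_simps)
  show ?thesis unfolding e using assms by (simp add: divide_right_mono)
qed



lemma exists_L:
  fixes b \<delta> q :: real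
  assumes b0: "0 < b" and b1: "b < 1" and d0: "0 < \<delta>" and d1: "\<delta> < 1"
    and qd: "q = 2*\<delta>*b/(1-b+2*\<delta>*b)"
  shows "\<exists>L. L \<le> -1/2 \<and> Af b L = q/2"
proof -
  have D: "0 < 1-b+2*\<delta>*b" using b0 b1 d0 by (simp add: add_pos_nonneg)
  have a0: "0 < q/2" unfolding qd using D b0 d0 by simp
  have a1: "q/2 \<le> b/(1+b)"
  proof -
    have "b * (\<delta> * (1 - b)) \<le> b * (1 - b)" using d1 b1 b0 by (intro mult_left_mono) auto
    then have i: "\<delta> * b * (1 + b) \<le> b * (1-b+2*\<delta>*b)" by (simp add: algebra_simps)
    have "q/2 = \<delta> * b / (1-b+2*\<delta>*b)" unfolding qd using D by (simp add: field_simps)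
    also have "\<dots> \<le> b/(1+b)"
      using i D b0 by (simp add: pos_divide_le_eq pos_le_divide_eq mult.commute mult.left_commute)
    finally show ?thesis .
  qed
  have "eventually (\<lambda>y. Af b y < q/2) at_bot"
    using order_tendstoD(2)[OF Af_lim_bot[OF b0 b1] a0] .
  then obtain N where N: "\<And>y. y \<le> N \<Longrightarrow> Af b y < q/2" unfolding eventually_at_bot_linorder by auto
  define y0 where "y0 = min N (-1/2)"
  have "Af b y0 \<le> q/2" using N[of y0] unfolding y0_def by simp
  moreover have "q/2 \<le> Af b (-1/2)" using a1 Af_mhalf[of b] by simp
  moreover have "y0 \<le> -1/2" unfolding y0_def by simp
  ultimately obtain L where "y0 \<le> L" "L \<le> -1/2" "Af b L = q/2"
    using IVT'[of "Af b" y0 "q/2" "-1/2"] Af_cont_on[OF b0] by blast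
  then show ?thesis by blast
qed

context
  fixes b \<delta> q L :: real
  assumes b0: "0 < b" and b1: "b < 1" and d0: "0 < \<delta>" and d1: "\<delta> < 1"
    and qd: "q = 2*\<delta>*b/(1-b+2*\<delta>*b)" and L1: "L \<le> -1/2" and L2: "Af b L = q/2"
begin

lemma Dpos: "0 < 1-b+2*\<delta>*b" using b0 b1 d0 by (simp add: add_pos_nonneg)

lemma q0: "0 < q" unfolding qd using Dpos b0 d0 by simp

lemma q1: "q < 1"
  unfolding qd using Dpos b1 by (simp add: divide_less_eq)

lemma key: "\<delta> * (1 - q) = q/2/b - q/2"
proof -
  define D where "D = 1-b+2*\<delta>*b"
  have Dp: "0 < D" unfolding D_def by (rule Dpos)
  have h1: "q/2 = \<delta>*b/D" unfolding qd using Dp unfolding D_def by (simp add: field_simps)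
  have h2: "q/2/b = \<delta>/D" unfolding h1 using b0 by (simp add: field_simps)
  have "q/2/b - q/2 = (\<delta> - \<delta>*b)/D" unfolding h2 h1 using b0 by (simp add: diff_divide_distrib)
  also have "\<dots> = \<delta> * ((1 - b)/D)" by (simp add: algebra_simps)
  also have "(1 - b)/D = 1 - q"
  proof -
    have "q = 2*\<delta>*b/D" unfolding qd D_def by simp
    then have "1 - q = (D - 2*\<delta>*b)/D" using Dp by (simp add: diff_divide_distrib)
    also have "D - 2*\<delta>*b = 1 - b" unfolding D_def by simp
    finally show ?thesis by simp
  qed
  finally show ?thesis by simp
qed

lemma spos: "0 < 1 - q" using q1 by simp

lemma Psi_low: "y \<le> L \<Longrightarrow> Psi b q y = 0"
  unfolding Psi_def using Af_mono[OF b0 b1, of y L] L2 spos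
  by (intro clamp01_0) (simp add: divide_nonpos_pos)

lemma Psi_mid: assumes "L \<le> y" "y \<le> -L" shows "Psi b q y = (Af b y - q/2) / (1 - q)"
proof -
  have "q/2 \<le> Af b y" using Af_mono[OF b0 b1 assms(1)] L2 by simp
  moreover have "Af b y \<le> 1 - q/2" using Af_mono[OF b0 b1 assms(2)] L2 Af_sym[OF b0, of L] by simp
  ultimately show ?thesis unfolding Psi_def using spos
    by (intro clamp01_id) (simp_all add: divide_le_eq)
qed

lemma Psi_high: assumes "-L \<le> y" shows "Psi b q y = 1"
proof -
  have "1 - q/2 \<le> Af b y" using Af_mono[OF b0 b1 assms] L2 Af_sym[OF b0, of L] by simp
  then show ?thesis unfolding Psi_def using spos
    by (intro clamp01_1) (simp add: le_divide_eq)
qed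

lemma Af_L1: "Af b (L + 1) = q/2/b"
  using Af_shift_low[OF b0, of "L + 1"] L1 L2 b0 by (simp add: field_simps)

lemma Psi_L1: "Psi b q (L + 1) = \<delta>"
proof -
  have "Psi b q (L + 1) = (q/2/b - q/2) / (1 - q)" using Psi_mid[of "L + 1"] L1 Af_L1 by simp
  also have "\<dots> = \<delta>" using key spos by (simp add: field_simps)
  finally show ?thesis .
qed

lemma Psi_UL: "Psi b q (- L - 1) = 1 - \<delta>"
proof -
  have "Af b (- L - 1) = 1 - q/2/b" using Af_sym[OF b0, of "L + 1"] Af_L1 by simp
  then have "Psi b q (- L - 1) = (1 - q/2/b - q/2) / (1 - q)" using Psi_mid[of "- L - 1"] L1 by simp
  also have "1 - q/2/b - q/2 = (1 - q) - \<delta> * (1 - q)" using key by simp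
  also have "((1 - q) - \<delta> * (1 - q)) / (1 - q) = 1 - \<delta>" using spos by (simp add: field_simps)
  finally show ?thesis .
qed

lemma h_up_mono:
  assumes "y1 \<le> y2"
  shows "(1/b) * Psi b q (y1 - 1) - max 0 (Psi b q y1 - \<delta>) \<le> (1/b) * Psi b q (y2 - 1) - max 0 (Psi b q y2 - \<delta>)"
proof (rule mono3[where p="L + 1" and r="- L", OF _ _ _ _ assms])
  show "L + 1 \<le> - L" using L1 by simp
next
  fix x y :: real assume xy: "x \<le> y" "y \<le> L + 1"
  have m: "max 0 (Psi b q z - \<delta>) = 0" if "z \<le> L + 1" for z
    using Psi_mono[OF b0 b1 q1 that] Psi_L1 by simp
  show "(1/b) * Psi b q (x - 1) - max 0 (Psi b q x - \<delta>) \<le> (1/b) * Psi b q (y - 1) - max 0 (Psi b q y - \<delta>)"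
    using m[of x] m[of y] xy Psi_mono[OF b0 b1 q1, of "x - 1" "y - 1"] b0 by (simp add: divide_right_mono)
next
  fix x y :: real assume xy: "L + 1 \<le> x" "x \<le> y" "y \<le> - L"
  have m: "max 0 (Psi b q z - \<delta>) = (Af b z - q/2) / (1 - q) - \<delta>"
      and p: "Psi b q (z - 1) = (Af b (z - 1) - q/2) / (1 - q)" if "L + 1 \<le> z" "z \<le> - L" for z
  proof -
    have "\<delta> \<le> Psi b q z" using Psi_mono[OF b0 b1 q1 that(1)] Psi_L1 by simp
    then show "max 0 (Psi b q z - \<delta>) = (Af b z - q/2) / (1 - q) - \<delta>"
      using Psi_mid[of z] that L1 by simp
    show "Psi b q (z - 1) = (Af b (z - 1) - q/2) / (1 - q)" using Psi_mid[of "z - 1"] that by simp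
  qed
  have "(1/b) * ((Af b (x - 1) - q/2) / (1 - q)) - (Af b x - q/2) / (1 - q)
      \<le> (1/b) * ((Af b (y - 1) - q/2) / (1 - q)) - (Af b y - q/2) / (1 - q)"
    by (rule alg1[OF b0 spos Af_j_mono[OF b0 b1 xy(2)]])
  then show "(1/b) * Psi b q (x - 1) - max 0 (Psi b q x - \<delta>) \<le> (1/b) * Psi b q (y - 1) - max 0 (Psi b q y - \<delta>)"
    using m[of x] m[of y] p[of x] p[of y] xy by simp
next
  fix x y :: real assume xy: "- L \<le> x" "x \<le> y"
  have "Psi b q x = 1" "Psi b q y = 1" using Psi_high xy by auto
  then show "(1/b) * Psi b q (x - 1) - max 0 (Psi b q x - \<delta>) \<le> (1/b) * Psi b q (y - 1) - max 0 (Psi b q y - \<delta>)"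
    using xy Psi_mono[OF b0 b1 q1, of "x - 1" "y - 1"] b0 by (simp add: divide_right_mono)
qed

lemma h_down_mono:
  assumes "y1 \<le> y2"
  shows "(1/b) * Psi b q (y1 + 1) - min (Psi b q y1) (1 - \<delta>) \<le> (1/b) * Psi b q (y2 + 1) - min (Psi b q y2) (1 - \<delta>)"
proof (rule mono3[where p="L" and r="- L - 1", OF _ _ _ _ assms])
  show "L \<le> - L - 1" using L1 by simp
next
  fix x y :: real assume xy: "x \<le> y" "y \<le> L"
  have m: "min (Psi b q z) (1 - \<delta>) = 0" if "z \<le> L" for z
    using Psi_low[OF that] d1 by simp
  show "(1/b) * Psi b q (x + 1) - min (Psi b q x) (1 - \<delta>) \<le> (1/b) * Psi b q (y + 1) - min (Psi b q y) (1 - \<delta>)"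
    using m[of x] m[of y] xy Psi_mono[OF b0 b1 q1, of "x + 1" "y + 1"] b0 by (simp add: divide_right_mono)
next
  fix x y :: real assume xy: "L \<le> x" "x \<le> y" "y \<le> - L - 1"
  have m: "min (Psi b q z) (1 - \<delta>) = (Af b z - q/2) / (1 - q)"
      and p: "Psi b q (z + 1) = (Af b (z + 1) - q/2) / (1 - q)" if "L \<le> z" "z \<le> - L - 1" for z
  proof -
    have "Psi b q z \<le> 1 - \<delta>" using Psi_mono[OF b0 b1 q1 that(2)] Psi_UL by simp
    then show "min (Psi b q z) (1 - \<delta>) = (Af b z - q/2) / (1 - q)"
      using Psi_mid[of z] that by simp
    show "Psi b q (z + 1) = (Af b (z + 1) - q/2) / (1 - q)" using Psi_mid[of "z + 1"] that by simp
  qed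
  have "(1/b) * ((Af b (x + 1) - q/2) / (1 - q)) - (Af b x - q/2) / (1 - q)
      \<le> (1/b) * ((Af b (y + 1) - q/2) / (1 - q)) - (Af b y - q/2) / (1 - q)"
    by (rule alg1[OF b0 spos Af_k_mono[OF b0 b1 xy(2)]])
  then show "(1/b) * Psi b q (x + 1) - min (Psi b q x) (1 - \<delta>) \<le> (1/b) * Psi b q (y + 1) - min (Psi b q y) (1 - \<delta>)"
    using m[of x] m[of y] p[of x] p[of y] xy by simp
next
  fix x y :: real assume xy: "- L - 1 \<le> x" "x \<le> y"
  have m: "min (Psi b q z) (1 - \<delta>) = 1 - \<delta>" if "- L - 1 \<le> z" for z
    using Psi_mono[OF b0 b1 q1 that] Psi_UL by simp
  show "(1/b) * Psi b q (x + 1) - min (Psi b q x) (1 - \<delta>) \<le> (1/b) * Psi b q (y + 1) - min (Psi b q y) (1 - \<delta>)"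
    using m[of x] m[of y] xy Psi_mono[OF b0 b1 q1, of "x + 1" "y + 1"] b0 by (simp add: divide_right_mono)
qed

end



lemma nice_maxmin:
  assumes F: "nice F 1" and t: "0 \<le> t" "t \<le> 1"
  shows "nice (\<lambda>x. max 0 (F x - t)) (1 - t)" and "nice (\<lambda>x. min (F x) t) t"
proof -
  have m: "\<forall>x y. x \<le> y \<longrightarrow> F x \<le> F y" and c: "\<forall>a. continuous (at_right a) F"
    and lb: "(F \<longlongrightarrow> 0) at_bot" and lt: "(F \<longlongrightarrow> 1) at_top" using F unfolding nice_def by auto
  have lb1: "((\<lambda>x. max 0 (F x - t)) \<longlongrightarrow> max 0 (0 - t)) at_bot" by (intro tendsto_intros lb)
  have lt1: "((\<lambda>x. max 0 (F x - t)) \<longlongrightarrow> max 0 (1 - t)) at_top" by (intro tendsto_intros lt)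
  have lb2: "((\<lambda>x. min (F x) t) \<longlongrightarrow> min 0 t) at_bot" by (intro tendsto_intros lb)
  have lt2: "((\<lambda>x. min (F x) t) \<longlongrightarrow> min 1 t) at_top" by (intro tendsto_intros lt)
  have mo1: "max 0 (F x - t) \<le> max 0 (F y - t)" if "x \<le> y" for x y
    by (intro max.mono order_refl diff_right_mono) (use m that in auto)
  have mo2: "min (F x) t \<le> min (F y) t" if "x \<le> y" for x y
    by (intro min.mono order_refl) (use m that in auto)
  show "nice (\<lambda>x. max 0 (F x - t)) (1 - t)" unfolding nice_def
    using mo1 c lb1 lt1 t by (auto intro!: continuous_max continuous_diff)
  show "nice (\<lambda>x. min (F x) t) t" unfolding nice_def
    using mo2 c lb2 lt2 t by (auto intro!: continuous_min)
qed

lemma tulap_nb: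
  fixes b \<delta> q :: real and k k' :: int
  assumes b0: "0 < b" and b1: "b < 1" and d0: "0 \<le> \<delta>"
    and qd: "q = 2*\<delta>*b/(1-b+2*\<delta>*b)" and kk: "\<bar>k - k'\<bar> \<le> 1" and B: "B \<in> sets borel"
  shows "measure (Tulap (of_int k) b q) B \<le> (1/b) * measure (Tulap (of_int k') b q) B + \<delta>"
proof -
  have D: "0 < 1-b+2*\<delta>*b" using b0 b1 d0 by (simp add: add_pos_nonneg)
  have q0: "0 \<le> q" unfolding qd using D b0 d0 by simp
  have q1: "q < 1" unfolding qd using D b1 by (simp add: divide_less_eq)
  define F where "F = (\<lambda>x. Psi b q (x - of_int k))"
  define G where "G = (\<lambda>x. Psi b q (x - of_int k'))"
  have nF: "nice F 1" unfolding F_def by (rule nice_Psi[OF b0 b1 q0 q1])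
  have nG: "nice G 1" unfolding G_def by (rule nice_Psi[OF b0 b1 q0 q1])
  have TF: "Tulap (of_int k) b q = interval_measure F" unfolding F_def by (rule Tulap_Psi[OF b0 q0 q1])
  have TG: "Tulap (of_int k') b q = interval_measure G" unfolding G_def by (rule Tulap_Psi[OF b0 q0 q1])
  have cb: "1 \<le> 1/b" using b0 b1 by simp
  have nu0: "0 \<le> measure (interval_measure G) B" by simp
  have mu0: "0 \<le> measure (interval_measure F) B" by simp
  consider "k' = k" | "k' = k + 1" | "k' = k - 1" using kk by linarith
  then show ?thesis
  proof cases
    case 1
    then have "F = G" unfolding F_def G_def by simp
    then have "measure (interval_measure F) B \<le> (1/b) * measure (interval_measure G) B"
      using cb mu0 mult_right_mono[OF cb mu0] by simp
    then show ?thesis unfolding TF TG using d0 by simp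
  next
    case kne: 2
    consider "1 \<le> \<delta>" | "\<delta> = 0" | "0 < \<delta> \<and> \<delta> < 1" using d0 by linarith
    then show ?thesis
    proof cases
      case 1
      interpret MF: finite_measure "interval_measure F" by (rule nice_fm[OF nF])
      have "measure (interval_measure F) B \<le> 1" using MF.bounded_measure[of B] nice_UNIV[OF nF] by simp
      then show ?thesis unfolding TF TG using 1 nu0 b0 by (smt (verit) divide_nonneg_pos mult_nonneg_nonneg zero_le_one)
    next
      case 2
      then have qz: "q = 0" unfolding qd by simp
      have PA: "Psi b q y = Af b y" for y
        unfolding Psi_def qz using Af_nonneg[OF b0 b1] Af_le1[OF b0 b1] by (simp add: clamp01_id)
      have "measure (interval_measure F) B \<le> (1/b) * measure (interval_measure G) B + 0"
      proof (rule dp_generic[OF nF nG nF nice_zero _ _ _ _ B])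
        show "F x = F x + 0" for x by simp
        show "0 \<le> 1/b" using b0 by simp
        show "(0::real) \<le> 0" by simp
        fix x y :: real assume xy: "x \<le> y"
        have "(1/b) * ((Af b (x - k - 1) - 0) / 1) - (Af b (x - k) - 0) / 1
            \<le> (1/b) * ((Af b (y - k - 1) - 0) / 1) - (Af b (y - k) - 0) / 1"
          using xy by (intro alg1 b0 Af_j_mono[OF b0 b1]) auto
        then show "1 / b * G x - F x \<le> 1 / b * G y - F y"
          unfolding F_def G_def PA kne by (simp add: algebra_simps)
      qed
      then show ?thesis unfolding TF TG using 2 by simp
    next
      case 3
      then obtain L where L: "L \<le> -1/2" "Af b L = q/2" using exists_L[OF b0 b1 _ _ qd] by blast
      define F1 where "F1 = (\<lambda>x. max 0 (F x - \<delta>))"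
      define F2 where "F2 = (\<lambda>x. min (F x) \<delta>)"
      have n1: "nice F1 (1 - \<delta>)" unfolding F1_def using nice_maxmin(1)[OF nF, of \<delta>] 3 by simp
      have n2: "nice F2 \<delta>" unfolding F2_def using nice_maxmin(2)[OF nF, of \<delta>] 3 by simp
      show ?thesis unfolding TF TG
      proof (rule dp_generic[OF nF nG n1 n2 _ _ _ _ B])
        show "F x = F1 x + F2 x" for x unfolding F1_def F2_def by simp
        show "0 \<le> 1/b" using b0 by simp
        show "\<delta> \<le> \<delta>" by simp
        fix x y :: real assume xy: "x \<le> y"
        have "(1/b) * Psi b q ((x - k) - 1) - max 0 (Psi b q (x - k) - \<delta>)
            \<le> (1/b) * Psi b q ((y - k) - 1) - max 0 (Psi b q (y - k) - \<delta>)"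
          using xy by (intro h_up_mono[OF b0 b1 _ _ qd L]) (use 3 in auto)
        then show "1 / b * G x - F1 x \<le> 1 / b * G y - F1 y"
          unfolding F_def G_def F1_def kne by (simp add: algebra_simps)
      qed
    qed
  next
    case kne: 3
    consider "1 \<le> \<delta>" | "\<delta> = 0" | "0 < \<delta> \<and> \<delta> < 1" using d0 by linarith
    then show ?thesis
    proof cases
      case 1
      interpret MF: finite_measure "interval_measure F" by (rule nice_fm[OF nF])
      have "measure (interval_measure F) B \<le> 1" using MF.bounded_measure[of B] nice_UNIV[OF nF] by simp
      then show ?thesis unfolding TF TG using 1 nu0 b0 by (smt (verit) divide_nonneg_pos mult_nonneg_nonneg zero_le_one)
    next
      case 2
      then have qz: "q = 0" unfolding qd by simp
      have PA: "Psi b q y = Af b y" for y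
        unfolding Psi_def qz using Af_nonneg[OF b0 b1] Af_le1[OF b0 b1] by (simp add: clamp01_id)
      have "measure (interval_measure F) B \<le> (1/b) * measure (interval_measure G) B + 0"
      proof (rule dp_generic[OF nF nG nF nice_zero _ _ _ _ B])
        show "F x = F x + 0" for x by simp
        show "0 \<le> 1/b" using b0 by simp
        show "(0::real) \<le> 0" by simp
        fix x y :: real assume xy: "x \<le> y"
        have "(1/b) * ((Af b (x - k + 1) - 0) / 1) - (Af b (x - k) - 0) / 1
            \<le> (1/b) * ((Af b (y - k + 1) - 0) / 1) - (Af b (y - k) - 0) / 1"
          using xy by (intro alg1 b0 Af_k_mono[OF b0 b1]) auto
        then show "1 / b * G x - F x \<le> 1 / b * G y - F y"
          unfolding F_def G_def PA kne by (simp add: algebra_simps)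
      qed
      then show ?thesis unfolding TF TG using 2 by simp
    next
      case 3
      then obtain L where L: "L \<le> -1/2" "Af b L = q/2" using exists_L[OF b0 b1 _ _ qd] by blast
      define F1 where "F1 = (\<lambda>x. min (F x) (1 - \<delta>))"
      define F2 where "F2 = (\<lambda>x. max 0 (F x - (1 - \<delta>)))"
      have n1: "nice F1 (1 - \<delta>)" unfolding F1_def using nice_maxmin(2)[OF nF, of "1 - \<delta>"] 3 by simp
      have n2: "nice F2 \<delta>" unfolding F2_def using nice_maxmin(1)[OF nF, of "1 - \<delta>"] 3 by simp
      show ?thesis unfolding TF TG
      proof (rule dp_generic[OF nF nG n1 n2 _ _ _ _ B])
        show "F x = F1 x + F2 x" for x unfolding F1_def F2_def by simp
        show "0 \<le> 1/b" using b0 by simp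
        show "\<delta> \<le> \<delta>" by simp
        fix x y :: real assume xy: "x \<le> y"
        have "(1/b) * Psi b q ((x - k) + 1) - min (Psi b q (x - k)) (1 - \<delta>)
            \<le> (1/b) * Psi b q ((y - k) + 1) - min (Psi b q (y - k)) (1 - \<delta>)"
          using xy by (intro h_down_mono[OF b0 b1 _ _ qd L]) (use 3 in auto)
        then show "1 / b * G x - F1 x \<le> 1 / b * G y - F1 y"
          unfolding F_def G_def F1_def kne by (simp add: algebra_simps)
      qed
    qed
  qed
qed



theorem theorem2:
  fixes \<epsilon> \<delta> :: real and n :: nat and T :: "'x list \<Rightarrow> int"
  assumes "\<epsilon> > 0" and "\<delta> \<ge> 0" and "n \<ge> 1"
    and "(SUP p \<in> {(X, X'). length X = n \<and> length X' = n \<and> hamming X X' = 1}.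
            ereal (real_of_int \<bar>T (fst p) - T (snd p)\<bar>)) = 1"
  shows "differentially_private n
           (\<lambda>X. Tulap (real_of_int (T X)) (exp (- \<epsilon>))
                  (2 * \<delta> * exp (- \<epsilon>) / (1 - exp (- \<epsilon>) + 2 * \<delta> * exp (- \<epsilon>))))
           \<epsilon> \<delta>"
  unfolding differentially_private_def
proof (intro allI impI, elim conjE)
  fix X X' :: "'x list" and B
  assume X: "length X = n" "length X' = n" "hamming X X' = 1"
    and B: "B \<in> sets (Tulap (real_of_int (T X)) (exp (- \<epsilon>))
                  (2 * \<delta> * exp (- \<epsilon>) / (1 - exp (- \<epsilon>) + 2 * \<delta> * exp (- \<epsilon>))))"
  define b where "b = exp (- \<epsilon>)"
  have b0: "0 < b" unfolding b_def by simp
  have b1: "b < 1" unfolding b_def using assms(1) by simp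
  have eb: "exp \<epsilon> = 1 / b" unfolding b_def by (simp add: exp_minus field_simps)
  have "ereal (real_of_int \<bar>T (fst (X, X')) - T (snd (X, X'))\<bar>)
      \<le> (SUP p \<in> {(X, X'). length X = n \<and> length X' = n \<and> hamming X X' = 1}.
            ereal (real_of_int \<bar>T (fst p) - T (snd p)\<bar>))"
    by (rule SUP_upper) (use X in auto)
  then have "real_of_int \<bar>T X - T X'\<bar> \<le> 1" using assms(4) by simp
  then have kk: "\<bar>T X - T X'\<bar> \<le> 1" by linarith
  have Bb: "B \<in> sets borel" using B unfolding Tulap_def by simp
  show "measure (Tulap (real_of_int (T X)) (exp (- \<epsilon>))
                  (2 * \<delta> * exp (- \<epsilon>) / (1 - exp (- \<epsilon>) + 2 * \<delta> * exp (- \<epsilon>)))) B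
        \<le> exp \<epsilon> * measure (Tulap (real_of_int (T X')) (exp (- \<epsilon>))
                  (2 * \<delta> * exp (- \<epsilon>) / (1 - exp (- \<epsilon>) + 2 * \<delta> * exp (- \<epsilon>)))) B + \<delta>"
    unfolding eb b_def[symmetric]
    by (rule tulap_nb[OF b0 b1 assms(2) refl kk Bb])
qed

end
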